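(* For all $n\ge1$, $k\ge1$ and every $\pi\in\mathbf{C}(n,k)$, the list $\mathcal{C}(\pi)$ contains every element of $\mathbf{C}(n,k)$ exactly once (so it has length $k^n n!$), each entry after the first is obtained from the preceding entry by a flip, and the first entry is obtained from the last entry by a flip of length $n$ (i.e. if $L$ is the last entry then $\mathrm{flip}_n(L)=\pi$).
   Context: Fix integers $n\ge1$, $k\ge1$. A $k$-coloured permutation of $\{1,\dots,n\}$ is a sequence $\pi=p_1p_2\cdots p_n$ with $p_i=v_i^{c_i}$, where $v_1\cdots v_n$ is a permutation of $\{1,\dots,n\}$ and each $c_i\in\{0,\dots,k-1\}$; the set of these is $\mathbf{C}(n,k)$. A pre-perm is a prefix $p_1\cdots p_j$ ($1\le j\le n$) of some element of $\mathbf{C}(n,k)$. For $p=v^c$ and integer $s$, $p^{+s}=v^{(c+s)\bmod k}$; for $\mathbf{p}=p_1\cdots p_j$, $\mathbf{p}^{+s}=p_1^{+s}\cdots p_j^{+s}$. For $1\le i\le n$, $\mathrm{flip}_i(p_1\cdots p_n)=p_i^{+1}p_{i-1}^{+1}\cdots p_1^{+1}p_{i+1}\cdots p_n$. For a pre-perm $\mathbf{p}$ of length $j$, $\rho(\mathbf{p})=r_1\cdots r_m$ ($m=kj$) is the concatenation $\mathbf{p}^{+(k-1)}\mathbf{p}^{+(k-2)}\cdots\mathbf{p}^{+0}$ viewed circularly (indices mod $m$), and $\rho(\mathbf{p})_i=r_{i-j+1}\cdots r_{i-1}$ (length $j-1$, indices mod $m$). The list $\mathcal{C}(\mathbf{p})$: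 if $j=1$, $\mathcal{C}(p_1)=p_1^{+0},p_1^{+1},\dots,p_1^{+(k-1)}$; if $j\ge2$, $\mathcal{C}(\mathbf{p})$ is the concatenation for $i=m,m-1,\dots,1$ of the lists obtained from $\mathcal{C}(\rho(\mathbf{p})_i)$ by appending $r_i$ to every entry. *)

theory Defs
  imports Main
begin

text \<open>A coloured symbol v^c is the pair (v, c). A (pre-)perm is a list of such pairs.\<close>

type_synonym csym = "nat \<times> nat"

definition Cnk :: "nat \<Rightarrow> nat \<Rightarrow> csym list set" where
  "Cnk n k = {ps. length ps = n \<and> distinct (map fst ps) \<and> set (map fst ps) = {1..n}
                  \<and> (\<forall>p\<in>set ps. snd p < k)}"

definition shift :: "nat \<Rightarrow> nat \<Rightarrow> csym \<Rightarrow> csym" where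
  "shift k s p = (fst p, (snd p + s) mod k)"

definition shiftl :: "nat \<Rightarrow> nat \<Rightarrow> csym list \<Rightarrow> csym list" where
  "shiftl k s ps = map (shift k s) ps"

definition flip :: "nat \<Rightarrow> nat \<Rightarrow> csym list \<Rightarrow> csym list" where
  "flip k i ps = shiftl k 1 (rev (take i ps)) @ drop i ps"

text \<open>rho(p) = p^{+(k-1)} p^{+(k-2)} ... p^{+0}, as a list r_1 ... r_m (r_i = rho ! (i-1)).\<close>
definition rho :: "nat \<Rightarrow> csym list \<Rightarrow> csym list" where
  "rho k ps = concat (map (\<lambda>t. shiftl k (k - 1 - t) ps) [0..<k])"

text \<open>rho(p)_i = r_{i-j+1} ... r_{i-1}, indices taken circularly mod m (1-based),
  for 1 <= i <= m, j = length p, m = k*j.\<close>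
definition rho_win :: "nat \<Rightarrow> csym list \<Rightarrow> nat \<Rightarrow> csym list" where
  "rho_win k ps i =
     (let j = length ps; r = rho k ps; m = length r
      in map (\<lambda>d. r ! ((i + m - j + d) mod m)) [0..<j - 1])"

lemma length_rho_win[simp]: "length (rho_win k ps i) = length ps - 1"
  by (simp add: rho_win_def Let_def)

function Clist :: "nat \<Rightarrow> csym list \<Rightarrow> csym list list" where
  "Clist k ps =
     (if length ps = 0 then []
      else if length ps = 1 then map (\<lambda>s. shiftl k s ps) [0..<k]
      else (let r = rho k ps; m = length r in
            concat (map (\<lambda>i. map (\<lambda>e. e @ [r ! (i - 1)]) (Clist k (rho_win k ps i)))
                        (rev [1..<m + 1]))))"
  by pat_completeness auto
termination
  by (relation "measure (\<lambda>(k, ps). length ps)") auto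

declare Clist.simps[simp del]

end

theory Submission imports Defs begin

lemma len_concat_upt:
  assumes "\<And>t. t < K \<Longrightarrow> length (f t) = j"
  shows "length (concat (map f [0..<K])) = K * j"
  using assms by (induction K) auto

lemma nth_concat_upt:
  assumes "\<And>t. t < K \<Longrightarrow> length (f t) = j" "t < K" "a < j"
  shows "concat (map f [0..<K]) ! (t * j + a) = f t ! a"
  using assms
proof (induction K)
  case 0 then show ?case by simp
next
  case (Suc K)
  have len: "length (concat (map f [0..<K])) = K * j"
    using Suc.prems(1) by (intro len_concat_upt) auto
  show ?case
  proof (cases "t < K")
    case True
    have "t * j + a < K * j"
    proof -
      have "t * j + a < t * j + j" using Suc.prems(3) by simp
      also have "\<dots> = Suc t * j" by simp
      also have "\<dots> \<le> K * j" using True by (intro mult_le_mono1) simp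
      finally show ?thesis .
    qed
    then show ?thesis using Suc True by (simp add: nth_append len)
  next
    case False
    then have "t = K" using Suc.prems(2) by simp
    then show ?thesis by (simp add: nth_append len)
  qed
qed

lemma length_shiftl[simp]: "length (shiftl k s ps) = length ps"
  by (simp add: shiftl_def)

lemma length_rho[simp]: "length (rho k ps) = k * length ps"
  unfolding rho_def by (rule len_concat_upt) simp

lemma rho_nth:
  assumes "a < length ps" "t < k"
  shows "rho k ps ! (t * length ps + a) = shift k (k - 1 - t) (ps ! a)"
  unfolding rho_def
  by (subst nth_concat_upt[where j="length ps"]) (use assms in \<open>auto simp: shiftl_def\<close>)

lemma shift_shift: "shift k a (shift k b p) = shift k (a + b) p"
  by (simp add: shift_def mod_add_right_eq add.assoc add.commute add.left_commute)

lemma shift_mod_eq: "a mod k = b mod k \<Longrightarrow> shift k a p = shift k b p"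
  by (simp add: shift_def) (metis mod_add_cong)

lemma shift0: "snd p < k \<Longrightarrow> shift k 0 p = p"
  by (simp add: shift_def)

lemma fst_shift[simp]: "fst (shift k s p) = fst p"
  by (simp add: shift_def)

lemma snd_shift_lt: "0 < k \<Longrightarrow> snd (shift k s p) < k"
  by (simp add: shift_def)

definition rc :: "nat \<Rightarrow> csym list \<Rightarrow> nat \<Rightarrow> csym" where
  "rc k ps s = rho k ps ! (s mod (k * length ps))"

lemma rc_formula:
  assumes "0 < k" "0 < length ps"
  shows "rc k ps s = shift k (k - 1 - s div length ps mod k) (ps ! (s mod length ps))"
proof -
  let ?j = "length ps"
  have e: "s mod (k * ?j) = (s div ?j mod k) * ?j + s mod ?j"
    by (metis mod_mult2_eq mult.commute add.commute)
  show ?thesis unfolding rc_def e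
    by (rule rho_nth) (use assms in auto)
qed

lemma rc_nth: "s < k * length ps \<Longrightarrow> rho k ps ! s = rc k ps s"
  by (simp add: rc_def)

lemma rc_add_m: "rc k ps (s + k * length ps) = rc k ps s"
  by (simp add: rc_def)

lemma rc_fst:
  assumes "0 < k" "0 < length ps"
  shows "fst (rc k ps s) = fst (ps ! (s mod length ps))"
  using rc_formula[OF assms] by simp

lemma rc_snd_lt:
  assumes "0 < k" "0 < length ps"
  shows "snd (rc k ps s) < k"
  using rc_formula[OF assms] snd_shift_lt assms by simp

lemma rc_step:
  assumes "0 < k" "0 < length ps"
  shows "rc k ps s = shift k 1 (rc k ps (s + length ps))"
proof -
  let ?j = "length ps" let ?q = "s div ?j"
  have "(s + ?j) div ?j = Suc ?q" using assms by (simp add: div_add_self2)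
  moreover have "(s + ?j) mod ?j = s mod ?j" by simp
  ultimately have "shift k 1 (rc k ps (s + ?j)) = shift k (1 + (k - 1 - Suc ?q mod k)) (ps ! (s mod ?j))"
    using rc_formula[OF assms] shift_shift by simp
  also have "\<dots> = shift k (k - 1 - ?q mod k) (ps ! (s mod ?j))"
  proof (rule shift_mod_eq)
    have lt: "?q mod k < k" using assms by simp
    show "(1 + (k - 1 - Suc ?q mod k)) mod k = (k - 1 - ?q mod k) mod k"
    proof (cases "Suc (?q mod k) = k")
      case True
      then show ?thesis by (simp add: mod_Suc)
    next
      case False
      then have "Suc ?q mod k = Suc (?q mod k)" by (simp add: mod_Suc)
      then show ?thesis using lt False by simp
    qed
  qed
  also have "\<dots> = rc k ps s" using rc_formula[OF assms] by simp
  finally show ?thesis by simp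
qed

lemma rho_win_rc:
  "rho_win k ps i = map (\<lambda>d. rc k ps (i + k * length ps - length ps + d)) [0..<length ps - 1]"
  by (simp add: rho_win_def rc_def Let_def)

lemma rc_top:
  assumes "0 < k" "d < length ps"
  shows "rc k ps ((k - 1) * length ps + d) = shift k 0 (ps ! d)"
proof -
  have "((k - 1) * length ps + d) div length ps = k - 1" 
  proof -
    have "length ps \<noteq> 0" using assms by linarith
    then have "(d + (k - 1) * length ps) div length ps = (k - 1) + d div length ps"
      by (rule div_mult_self1)
    then show ?thesis using assms by (simp add: add.commute)
  qed
  moreover have "((k - 1) * length ps + d) mod length ps = d" using assms by simp
  moreover have "0 < length ps" using assms by linarith
  ultimately show ?thesis using rc_formula[of k ps "(k - 1) * length ps + d"] assms(1) by simp
qed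

lemma win_rotate:
  assumes "0 < k" "2 \<le> length ps" "1 \<le> i" "i \<le> k * length ps"
  shows "map fst (rho_win k ps i @ [rho k ps ! (i - 1)]) = rotate i (map fst ps)"
proof (rule nth_equalityI)
  let ?j = "length ps"
  have jp: "0 < ?j" using assms by linarith
  show "length (map fst (rho_win k ps i @ [rho k ps ! (i - 1)])) = length (rotate i (map fst ps))"
    using assms by simp
  fix d assume "d < length (map fst (rho_win k ps i @ [rho k ps ! (i - 1)]))"
  then have d: "d < ?j" using assms by simp
  have mj: "k * ?j - ?j = (k - 1) * ?j" by (simp add: diff_mult_distrib)
  show "map fst (rho_win k ps i @ [rho k ps ! (i - 1)]) ! d = rotate i (map fst ps) ! d"
  proof (cases "d < ?j - 1")
    case True
    have "i + k * ?j - ?j + d = (i + d) + (k - 1) * ?j"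
      using assms mj by (simp add: algebra_simps)
    then have "(i + k * ?j - ?j + d) mod ?j = (i + d) mod ?j" by (simp only: mod_mult_self1)
    then show ?thesis using True d jp assms
      by (simp add: nth_append rho_win_rc rc_fst nth_rotate)
  next
    case False
    then have dd: "d = ?j - 1" using d by simp
    have "(i - 1) mod ?j = (i + (?j - 1)) mod ?j"
    proof -
      have "i + (?j - 1) = (i - 1) + ?j" using assms jp by simp
      then show ?thesis by simp
    qed
    then show ?thesis using dd d jp assms
      by (simp add: nth_append rho_win_rc rc_fst nth_rotate rc_nth)
  qed
qed

definition valid :: "nat \<Rightarrow> csym list \<Rightarrow> bool" where
  "valid k ps \<longleftrightarrow> distinct (map fst ps) \<and> (\<forall>p\<in>set ps. snd p < k)"

definition arr :: "nat \<Rightarrow> csym list \<Rightarrow> csym list set" where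
  "arr k ps = {qs. length qs = length ps \<and> distinct (map fst qs) \<and> set (map fst qs) = set (map fst ps)
                 \<and> (\<forall>q\<in>set qs. snd q < k)}"

lemma set_rho:
  assumes "0 < k" "0 < length ps" "valid k ps"
  shows "set (rho k ps) = {p. fst p \<in> set (map fst ps) \<and> snd p < k}"
proof
  let ?j = "length ps"
  show "set (rho k ps) \<subseteq> {p. fst p \<in> set (map fst ps) \<and> snd p < k}"
  proof
    fix p assume "p \<in> set (rho k ps)"
    then obtain s where s: "s < k * ?j" "p = rho k ps ! s" by (auto simp: in_set_conv_nth)
    then have "p = rc k ps s" by (simp add: rc_nth)
    then show "p \<in> {p. fst p \<in> set (map fst ps) \<and> snd p < k}"
      using rc_fst[OF assms(1,2)] rc_snd_lt[OF assms(1,2)] assms(2) by auto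
  qed
  show "{p. fst p \<in> set (map fst ps) \<and> snd p < k} \<subseteq> set (rho k ps)"
  proof
    fix p assume "p \<in> {p. fst p \<in> set (map fst ps) \<and> snd p < k}"
    then obtain a where a: "a < ?j" "fst p = fst (ps ! a)" and c: "snd p < k"
      by (auto simp: in_set_conv_nth)
    define c0 where "c0 = snd (ps ! a)"
    have c0: "c0 < k" using assms(3) a(1) unfolding valid_def c0_def by auto
    define s where "s = (snd p + k - c0) mod k"
    have sk: "s < k" using assms(1) by (simp add: s_def)
    define t where "t = k - 1 - s"
    have tk: "t < k" "k - 1 - t = s" using sk assms(1) by (auto simp: t_def)
    have "rho k ps ! (t * ?j + a) = shift k s (ps ! a)" using rho_nth[OF a(1) tk(1)] tk(2) by simp
    also have "\<dots> = p"
    proof -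
      have "(c0 + s) mod k = (c0 + (snd p + k - c0)) mod k" by (simp add: s_def mod_add_right_eq)
      also have "c0 + (snd p + k - c0) = snd p + k" using c0 by simp
      finally have "(c0 + s) mod k = snd p" using c by simp
      then show ?thesis using a(2) by (simp add: shift_def c0_def prod_eq_iff)
    qed
    finally have "rho k ps ! (t * ?j + a) = p" .
    moreover have "t * ?j + a < k * ?j"
    proof -
      have "t * ?j + a < t * ?j + ?j" using a by simp
      also have "\<dots> = Suc t * ?j" by simp
      also have "\<dots> \<le> k * ?j" using tk by (intro mult_le_mono1) simp
      finally show ?thesis .
    qed
    ultimately show "p \<in> set (rho k ps)" by (metis length_rho nth_mem)
  qed
qed

lemma distinct_rho:
  assumes "0 < k" "0 < length ps" "valid k ps"
  shows "distinct (rho k ps)"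
proof (rule card_distinct)
  have "{p. fst p \<in> set (map fst ps) \<and> snd p < k} = set (map fst ps) \<times> {..<k}" by (auto intro: rev_image_eqI)
  then have "card (set (rho k ps)) = card (set (map fst ps)) * k"
    using set_rho[OF assms] by (simp add: card_cartesian_product)
  also have "\<dots> = length ps * k" using assms(3) distinct_card[of "map fst ps"] by (simp add: valid_def)
  finally show "card (set (rho k ps)) = length (rho k ps)" by simp
qed

lemma flip_append: "i \<le> length e \<Longrightarrow> flip k i (e @ [x]) = flip k i e @ [x]"
  by (simp add: flip_def)

lemma flip_full: "flip k (Suc (length L)) (L @ [x]) = shift k 1 x # flip k (length L) L"
  by (simp add: flip_def shiftl_def)

lemma succ_concat:
  "(\<forall>x\<in>set xs. B x \<noteq> [] \<and> successively P (B x)) \<Longrightarrow>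
   successively (\<lambda>x y. P (last (B x)) (hd (B y))) xs \<Longrightarrow> successively P (concat (map B xs))"
proof (induction xs)
  case Nil then show ?case by simp
next
  case (Cons x xs)
  show ?case
  proof (cases "xs = []")
    case True then show ?thesis using Cons by simp
  next
    case False
    then obtain y ys where xs: "xs = y # ys" by (cases xs) auto
    have "hd (concat (map B xs)) = hd (B y)" using Cons.prems xs by simp
    moreover have "successively (\<lambda>x y. P (last (B x)) (hd (B y))) xs"
      using Cons.prems(2) xs by (simp add: successively_Cons)
    then have "successively P (concat (map B xs))"
      using Cons.IH Cons.prems by simp
    moreover have "concat (map B xs) \<noteq> []" using Cons.prems xs by simp
    moreover have "P (last (B x)) (hd (B y))" using Cons.prems(2) xs by simp
    ultimately show ?thesis using Cons.prems
      by (simp add: successively_append_iff)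
  qed
qed

lemma distinct_concat_map:
  "distinct xs \<Longrightarrow> (\<forall>x\<in>set xs. distinct (B x)) \<Longrightarrow>
   (\<forall>x\<in>set xs. \<forall>y\<in>set xs. x \<noteq> y \<longrightarrow> set (B x) \<inter> set (B y) = {}) \<Longrightarrow> distinct (concat (map B xs))"
  by (induction xs) auto

lemma succ_upt: "successively (\<lambda>x y. y = Suc x) [a..<b]"
proof (induction b)
  case 0 then show ?case by simp
next
  case (Suc b)
  show ?case
  proof (cases "a < b")
    case True
    then have "last [a..<b] = b - 1" by (simp add: last_upt)
    then show ?thesis using Suc True by (simp add: successively_append_iff)
  next
    case False
    then have "[a..<Suc b] = [] \<or> [a..<Suc b] = [b]" by auto
    then show ?thesis by auto
  qed
qed

lemma length_concat_const:
  "(\<forall>x\<in>set xs. length (B x) = c) \<Longrightarrow> length (concat (map B xs)) = length xs * c"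
  by (induction xs) auto

definition R :: "nat \<Rightarrow> nat \<Rightarrow> csym list \<Rightarrow> csym list \<Rightarrow> bool" where
  "R k j a b \<longleftrightarrow> (\<exists>i\<in>{1..j}. b = flip k i a)"

definition Good :: "nat \<Rightarrow> csym list \<Rightarrow> bool" where
  "Good k ps \<longleftrightarrow> distinct (Clist k ps) \<and> set (Clist k ps) = arr k ps
     \<and> length (Clist k ps) = k ^ length ps * fact (length ps)
     \<and> successively (R k (length ps)) (Clist k ps) \<and> Clist k ps \<noteq> []
     \<and> hd (Clist k ps) = ps \<and> flip k (length ps) (last (Clist k ps)) = ps"

lemma mod_inj_aux: "(c + s) mod k = (c + s') mod (k::nat) \<Longrightarrow> s < k \<Longrightarrow> s' \<le> s \<Longrightarrow> s = s'"
proof -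
  assume a: "(c + s) mod k = (c + s') mod k" "s < k" "s' \<le> s"
  then have "k dvd (c + s) - (c + s')" by (metis mod_eq_dvd_iff_nat add_le_cancel_left)
  then have "k dvd s - s'" by simp
  moreover have "s - s' < k" using a by simp
  ultimately have "s - s' = 0" by (metis nat_dvd_not_less not_gr_zero)
  then show ?thesis using a by simp
qed
lemma mod_inj: "(c + s) mod k = (c + s') mod (k::nat) \<Longrightarrow> s < k \<Longrightarrow> s' < k \<Longrightarrow> s = s'"
  by (metis mod_inj_aux nat_le_linear)

lemma Clist_one: "Clist k [x] = map (\<lambda>s. [shift k s x]) [0..<k]"
  by (subst Clist.simps) (simp add: shiftl_def)

lemma base:
  assumes k: "0 < k" and v: "valid k [x]"
  shows "Good k [x]"
proof -
  obtain v c where x: "x = (v, c)" by (cases x)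
  have c: "c < k" using v x by (simp add: valid_def)
  have sh: "shift k s x = (v, (c + s) mod k)" for s by (simp add: shift_def x)
  have inj: "inj_on (\<lambda>s. [shift k s x]) {0..<k}"
  proof (rule inj_onI)
    fix s s' assume "s \<in> {0..<k}" "s' \<in> {0..<k}" "[shift k s x] = [shift k s' x]"
    then have "(c + s) mod k = (c + s') mod k" "s < k" "s' < k" by (auto simp: sh)
    then show "s = s'"
      by (rule mod_inj)
  qed
  have dist: "distinct (Clist k [x])" unfolding Clist_one
    by (simp add: distinct_map inj)
  have set: "set (Clist k [x]) = arr k [x]"
  proof
    show "set (Clist k [x]) \<subseteq> arr k [x]" unfolding Clist_one
      using k by (auto simp: arr_def shift_def x)
    show "arr k [x] \<subseteq> set (Clist k [x])"
    proof
      fix q assume "q \<in> arr k [x]"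
      then obtain c' where q: "q = [(v, c')]" "c' < k"
        by (auto simp: arr_def x length_Suc_conv)
      define s where "s = (c' + k - c) mod k"
      have "(c + s) mod k = c'"
      proof -
        have "(c + s) mod k = (c + (c' + k - c)) mod k" by (simp add: s_def mod_add_right_eq)
        also have "c + (c' + k - c) = c' + k" using c by simp
        finally show ?thesis using q by simp
      qed
      moreover have "s < k" using k by (simp add: s_def)
      ultimately show "q \<in> set (Clist k [x])" unfolding Clist_one using q
        by (auto simp: sh)
    qed
  qed
  have succ: "successively (R k 1) (Clist k [x])" unfolding Clist_one successively_map
    by (rule successively_mono[OF succ_upt])
       (auto simp: R_def flip_def shiftl_def shift_shift)
  have hd: "hd (Clist k [x]) = [x]" unfolding Clist_one using k c
    by (simp add: hd_map upt_conv_Cons shift0 x)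
  have lst: "flip k 1 (last (Clist k [x])) = [x]"
  proof -
    have "last (map (\<lambda>s. [shift k s x]) [0..<k]) = [shift k (k - 1) x]"
      using k by (simp add: last_map)
    moreover have "shift k 1 (shift k (k - 1) x) = x"
    proof -
      have "shift k 1 (shift k (k - 1) x) = shift k (1 + (k - 1)) x" by (rule shift_shift)
      also have "1 + (k - 1) = k" using k by simp
      finally show ?thesis using c by (simp add: shift_def x)
    qed
    ultimately show ?thesis by (simp add: flip_def shiftl_def Clist_one)
  qed
  show ?thesis using dist set succ hd lst k
    by (simp add: Good_def Clist_one)
qed

lemma step:
  assumes k: "0 < k" and len: "length ps = Suc (Suc j')" and v: "valid k ps"
    and IH: "\<And>qs. length qs = Suc j' \<Longrightarrow> valid k qs \<Longrightarrow> Good k qs"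
  shows "Good k ps"
proof -
  define j where "j = length ps"
  define m where "m = k * j"
  define M where "M = (k - 1) * j"
  define r where "r = rho k ps"
  define W where "W = rho_win k ps"
  define B where "B = (\<lambda>i. map (\<lambda>e. e @ [r ! (i - 1)]) (Clist k (W i)))"
  have j2: "2 \<le> j" "0 < j" using len by (auto simp: j_def)
  have mM: "m = M + j" using k by (simp add: m_def M_def algebra_simps)
  have mpos: "0 < m" using k j2 by (simp add: m_def)
  have C: "Clist k ps = concat (map B (rev [1..<m + 1]))"
    by (subst Clist.simps) (use len in \<open>simp add: Let_def B_def W_def r_def m_def j_def\<close>)
  have Wnth: "W i ! d = rc k ps (i + M + d)" if "d < j - 1" for i d
  proof -
    have "i + k * j - j + d = i + M + d" using mM by (simp add: m_def)
    then show ?thesis using that by (simp add: W_def rho_win_rc j_def)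
  qed
  have lenW: "length (W i) = Suc j'" for i using len by (simp add: W_def)
  have rnth: "r ! s = rc k ps s" if "s < m" for s
    using that by (simp add: r_def rc_nth m_def j_def)
  have rcm: "rc k ps (s + m) = rc k ps s" for s
    by (simp add: rc_add_m m_def j_def)
  have rcstep: "rc k ps s = shift k 1 (rc k ps (s + j))" for s
    using rc_step[of k ps s] k j2 by (simp add: j_def)
  have rctop: "rc k ps (M + d) = ps ! d" if "d < j" for d
  proof -
    have "rc k ps (M + d) = shift k 0 (ps ! d)" using rc_top[of k d ps] k that by (simp add: M_def j_def)
    also have "\<dots> = ps ! d" using v that by (intro shift0) (auto simp: valid_def j_def)
    finally show ?thesis .
  qed
  have wrot: "map fst (W i) @ [fst (r ! (i - 1))] = rotate i (map fst ps)" if "i \<in> {1..m}" for i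
    using win_rotate[of k ps i] k j2 that by (simp add: W_def r_def m_def j_def)
  have wdist: "distinct (map fst (W i))" "fst (r ! (i - 1)) \<notin> set (map fst (W i))"
    and wset: "insert (fst (r ! (i - 1))) (set (map fst (W i))) = set (map fst ps)"
    if "i \<in> {1..m}" for i
  proof -
    have "distinct (map fst (W i) @ [fst (r ! (i - 1))])" using wrot[OF that] v by (simp add: valid_def)
    then show "distinct (map fst (W i))" "fst (r ! (i - 1)) \<notin> set (map fst (W i))" by auto
    have "set (map fst (W i) @ [fst (r ! (i - 1))]) = set (map fst ps)" using wrot[OF that] by simp
    then show "insert (fst (r ! (i - 1))) (set (map fst (W i))) = set (map fst ps)" by simp
  qed
  have wcol: "\<forall>q\<in>set (W i). snd q < k" for i
    using rc_snd_lt[of k ps] k j2 by (auto simp: W_def rho_win_rc j_def)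
  have rcol: "snd (r ! s) < k" if "s < m" for s
    using rc_snd_lt[of k ps] k j2 rnth[OF that] by (simp add: j_def)
  have wvalid: "valid k (W i)" if "i \<in> {1..m}" for i
    using wdist(1)[OF that] wcol by (simp add: valid_def)
  have G: "Good k (W i)" if "i \<in> {1..m}" for i
    using IH[OF lenW wvalid[OF that]] .
  have rdist: "distinct r" using distinct_rho[of k ps] k j2 v by (simp add: r_def j_def)
  have lenr: "length r = m" by (simp add: r_def m_def j_def)
  have setr: "set r = {p. fst p \<in> set (map fst ps) \<and> snd p < k}"
    using set_rho[of k ps] k j2 v by (simp add: r_def j_def)
  have Bne: "B i \<noteq> []" if "i \<in> {1..m}" for i using G[OF that] by (simp add: B_def Good_def)
  have jj: "j = Suc (Suc j')" using len by (simp add: j_def)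
  have setI: "set (rev [1..<m + 1]) = {1..m}" "set [1..<m + 1] = {1..m}" by auto

  have P_len: "length (Clist k ps) = k ^ length ps * fact (length ps)"
  proof -
    have "length (Clist k ps) = length (rev [1..<m + 1]) * (k ^ Suc j' * fact (Suc j'))"
      unfolding C
    proof (rule length_concat_const, intro ballI)
      fix x assume "x \<in> set (rev [1..<m + 1])"
      then have "x \<in> {1..m}" by auto
      then show "length (B x) = k ^ Suc j' * fact (Suc j')"
        using G[of x] lenW[of x] by (simp add: B_def Good_def)
    qed
    also have "\<dots> = m * (k ^ Suc j' * fact (Suc j'))" by simp
    also have "\<dots> = k ^ Suc (Suc j') * fact (Suc (Suc j'))"
      unfolding m_def j_def len by (simp only: fact_Suc[of "Suc j'"] power_Suc) (simp add: algebra_simps)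
    also have "\<dots> = k ^ length ps * fact (length ps)" using len by simp
    finally show ?thesis .
  qed
  have P_dist: "distinct (Clist k ps)"
    unfolding C
  proof (rule distinct_concat_map)
    show "distinct (rev [1..<m + 1])" by simp
    show "\<forall>x\<in>set (rev [1..<m + 1]). distinct (B x)"
    proof
      fix x assume "x \<in> set (rev [1..<m + 1])"
      then have "x \<in> {1..m}" by auto
      then show "distinct (B x)" using G[of x]
        by (simp add: B_def Good_def distinct_map inj_on_def)
    qed
    show "\<forall>x\<in>set (rev [1..<m + 1]). \<forall>y\<in>set (rev [1..<m + 1]). x \<noteq> y \<longrightarrow> set (B x) \<inter> set (B y) = {}"
    proof (intro ballI impI)
      fix x y assume xy: "x \<in> set (rev [1..<m + 1])" "y \<in> set (rev [1..<m + 1])" "x \<noteq> y"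
      then have "x - 1 < m" "y - 1 < m" "x - 1 \<noteq> y - 1" by auto
      then have "r ! (x - 1) \<noteq> r ! (y - 1)" using rdist lenr by (simp add: nth_eq_iff_index_eq)
      then show "set (B x) \<inter> set (B y) = {}" by (auto simp: B_def)
    qed
  qed
  have P_set: "set (Clist k ps) = arr k ps"
  proof -
    have e: "set (Clist k ps) = (\<Union>i\<in>{1..m}. set (B i))" by (simp only: C set_concat set_map setI image_image set_rev)
    show ?thesis unfolding e
    proof
      show "(\<Union>i\<in>{1..m}. set (B i)) \<subseteq> arr k ps"
      proof
        fix q assume "q \<in> (\<Union>i\<in>{1..m}. set (B i))"
        then obtain i e where i: "i \<in> {1..m}" and q: "q = e @ [r ! (i - 1)]" and e: "e \<in> set (Clist k (W i))"
          by (auto simp: B_def)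
        have ea: "e \<in> arr k (W i)" using e G[OF i] by (simp add: Good_def)
        have im: "i - 1 < m" using i by auto
        show "q \<in> arr k ps"
          using ea wdist[OF i] wset[OF i] rcol[OF im] lenW[of i] len
          by (auto simp: arr_def q)
      qed
      show "arr k ps \<subseteq> (\<Union>i\<in>{1..m}. set (B i))"
      proof
        fix q assume qa: "q \<in> arr k ps"
        then have lq: "length q = Suc (Suc j')" using len by (simp add: arr_def)
        then have qne: "q \<noteq> []" by auto
        have lastin: "last q \<in> set r"
        proof -
          have "last q \<in> set q" using qne by simp
          then have "fst (last q) \<in> set (map fst q)" "snd (last q) < k" using qa by (auto simp: arr_def)
          then show ?thesis using qa setr by (simp add: arr_def)
        qed
        then obtain s where s: "s < m" "r ! s = last q" using lenr by (auto simp: in_set_conv_nth)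
        define i where "i = Suc s"
        have i: "i \<in> {1..m}" using s by (simp add: i_def)
        have ri: "r ! (i - 1) = last q" using s by (simp add: i_def)
        have qsplit: "q = butlast q @ [last q]" using qne by simp
        have mq: "map fst q = map fst (butlast q) @ [fst (last q)]" by (subst qsplit) simp
        have dq: "distinct (map fst (butlast q) @ [fst (last q)])" using qa mq by (simp add: arr_def)
        then have bd: "distinct (map fst (butlast q))" "fst (last q) \<notin> set (map fst (butlast q))"
          by simp_all
        have bs: "set (map fst (butlast q)) = set (map fst (W i))"
        proof -
          have "set (map fst q) = set (map fst ps)" using qa by (simp add: arr_def)
          moreover have "set (map fst q) = insert (fst (last q)) (set (map fst (butlast q)))"
            using mq by simp
          ultimately have "insert (fst (last q)) (set (map fst (butlast q))) = insert (fst (last q)) (set (map fst (W i)))"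
            using wset[OF i] ri by simp
          then show ?thesis using bd(2) wdist(2)[OF i] ri
            by (metis Diff_insert_absorb)
        qed
        have col: "\<forall>x\<in>set (butlast q). snd x < k" using qa by (auto simp: arr_def dest: in_set_butlastD)
        have "butlast q \<in> arr k (W i)"
          using bd(1) bs lq lenW[of i] col by (simp add: arr_def)
        then have bin: "butlast q \<in> set (Clist k (W i))" using G[OF i] by (simp add: Good_def)
        have "q = butlast q @ [r ! (i - 1)]" using ri qsplit by simp
        then have "q \<in> (\<lambda>e. e @ [r ! (i - 1)]) ` set (Clist k (W i))" using bin by blast
        then have "q \<in> set (B i)" by (simp add: B_def)
        then show "q \<in> (\<Union>i\<in>{1..m}. set (B i))" using i by blast
      qed
    qed
  qed
  have between: "R k j (last (B (Suc b))) (hd (B b))" if b: "1 \<le> b" "Suc b \<le> m" for b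
  proof -
    have sb: "Suc b \<in> {1..m}" and bb: "b \<in> {1..m}" using b by auto
    define L where "L = last (Clist k (W (Suc b)))"
    have Lin: "L \<in> set (Clist k (W (Suc b)))" using G[OF sb] unfolding Good_def L_def by (metis last_in_set)
    then have lL: "length L = Suc j'" using G[OF sb] lenW by (simp add: Good_def arr_def)
    have fL: "flip k (Suc j') L = W (Suc b)" using G[OF sb] lenW by (simp add: Good_def L_def)
    have lB: "last (B (Suc b)) = L @ [r ! b]" using G[OF sb] by (simp add: B_def Good_def last_map L_def)
    have hB: "hd (B b) = W b @ [r ! (b - 1)]" using G[OF bb] by (simp add: B_def Good_def hd_map)
    have "flip k j (last (B (Suc b))) = shift k 1 (r ! b) # W (Suc b)"
      using flip_full[of k L "r ! b"] lB lL fL jj by simp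
    also have "\<dots> = W b @ [r ! (b - 1)]"
    proof (rule nth_equalityI)
      show "length (shift k 1 (r ! b) # W (Suc b)) = length (W b @ [r ! (b - 1)])" using lenW by simp
      fix d assume "d < length (shift k 1 (r ! b) # W (Suc b))"
      then have d: "d < j" using lenW jj by simp
      show "(shift k 1 (r ! b) # W (Suc b)) ! d = (W b @ [r ! (b - 1)]) ! d"
      proof (cases d)
        case 0
        have "(W b @ [r ! (b - 1)]) ! 0 = rc k ps (b + M + 0)" using lenW jj by (simp add: nth_append Wnth)
        also have "\<dots> = shift k 1 (rc k ps (b + M + 0 + j))" by (rule rcstep)
        also have "b + M + 0 + j = b + m" using mM by simp
        also have "rc k ps (b + m) = r ! b" using rcm rnth b by simp
        finally show ?thesis using 0 by simp
      next
        case (Suc d')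
        have lhs: "(shift k 1 (r ! b) # W (Suc b)) ! d = rc k ps (Suc b + M + d')"
          using Suc d jj by (simp add: Wnth)
        show ?thesis
        proof (cases "d < j - 1")
          case True
          then have "(W b @ [r ! (b - 1)]) ! d = rc k ps (b + M + d)" using lenW jj
            by (simp add: nth_append Wnth)
          then show ?thesis using lhs Suc by simp
        next
          case False
          then have dd: "d' = j'" using Suc d jj by simp
          have "(W b @ [r ! (b - 1)]) ! d = r ! (b - 1)" using lenW jj Suc dd by (simp add: nth_append)
          also have "\<dots> = rc k ps (b - 1)" using rnth[of "b - 1"] b by simp
          also have "\<dots> = rc k ps ((b - 1) + m)" by (rule rcm[symmetric])
          also have "(b - 1) + m = Suc b + M + d'" using mM dd jj b by simp
          finally show ?thesis using lhs by simp
        qed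
      qed
    qed
    finally have "flip k j (last (B (Suc b))) = hd (B b)" using hB by simp
    then show ?thesis using j2 unfolding R_def by (intro bexI[of _ j]) auto
  qed
  have P_succ: "successively (R k (length ps)) (Clist k ps)"
    unfolding C
  proof (rule succ_concat)
    show "\<forall>x\<in>set (rev [1..<m + 1]). B x \<noteq> [] \<and> successively (R k (length ps)) (B x)"
    proof
      fix x assume "x \<in> set (rev [1..<m + 1])"
      then have x: "x \<in> {1..m}" by auto
      have "successively (R k (Suc j')) (Clist k (W x))" using G[OF x] lenW by (simp add: Good_def)
      then have "successively (R k (length ps)) (B x)"
        unfolding B_def successively_map
      proof (rule successively_mono)
        fix a b assume ab: "a \<in> set (Clist k (W x))" "b \<in> set (Clist k (W x))" "R k (Suc j') a b"
        have la: "length a = Suc j'" using ab(1) G[OF x] lenW by (simp add: Good_def arr_def)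
        obtain i where i: "i \<in> {1..Suc j'}" "b = flip k i a" using ab(3) by (auto simp: R_def)
        have "flip k i (a @ [r ! (x - 1)]) = b @ [r ! (x - 1)]" using i la by (simp add: flip_append)
        then show "R k (length ps) (a @ [r ! (x - 1)]) (b @ [r ! (x - 1)])"
          using i len unfolding R_def by (intro bexI[of _ i]) auto
      qed
      then show "B x \<noteq> [] \<and> successively (R k (length ps)) (B x)" using Bne[OF x] by simp
    qed
    show "successively (\<lambda>x y. R k (length ps) (last (B x)) (hd (B y))) (rev [1..<m + 1])"
      unfolding successively_rev
    proof (rule successively_mono[OF succ_upt])
      fix x y assume "x \<in> set [1..<m + 1]" "y \<in> set [1..<m + 1]" "y = Suc x"
      then have "1 \<le> x" "Suc x \<le> m" "y = Suc x" by auto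
      then show "R k (length ps) (last (B y)) (hd (B x))" using between[of x] by (simp add: j_def)
    qed
  qed
  have P_ne: "Clist k ps \<noteq> []"
    using Bne[of m] mpos unfolding C by (cases m) auto
  have P_hd: "hd (Clist k ps) = ps"
  proof -
    have "rev [1..<m + 1] = m # rev [1..<m]" using mpos by simp
    then have "hd (Clist k ps) = hd (B m)" using Bne[of m] mpos unfolding C by simp
    also have "\<dots> = W m @ [r ! (m - 1)]" using G[of m] mpos
      by (simp add: B_def Good_def hd_map)
    also have "\<dots> = ps"
    proof (rule nth_equalityI)
      show "length (W m @ [r ! (m - 1)]) = length ps" using lenW len by simp
      fix d assume "d < length (W m @ [r ! (m - 1)])"
      then have d: "d < j" using lenW jj by simp
      show "(W m @ [r ! (m - 1)]) ! d = ps ! d"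
      proof (cases "d < j - 1")
        case True
        then have "(W m @ [r ! (m - 1)]) ! d = rc k ps (m + M + d)" using lenW jj
          by (simp add: nth_append Wnth)
        also have "m + M + d = (M + d) + m" by simp
        also have "rc k ps \<dots> = ps ! d" using rcm rctop d by simp
        finally show ?thesis .
      next
        case False
        then have dd: "d = j - 1" using d by simp
        then have "(W m @ [r ! (m - 1)]) ! d = r ! (m - 1)" using lenW jj by (simp add: nth_append)
        also have "\<dots> = rc k ps (M + d)" using rnth[of "m - 1"] mpos mM dd jj by simp
        also have "\<dots> = ps ! d" using rctop d by simp
        finally show ?thesis .
      qed
    qed
    finally show ?thesis .
  qed
  have P_last: "flip k (length ps) (last (Clist k ps)) = ps"
  proof -
    have one: "1 \<in> {1..m}" using mpos by simp
    have "rev [1..<m + 1] = rev [2..<m + 1] @ [1]" using mpos by (simp add: upt_conv_Cons numeral_2_eq_2)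
    then have "last (Clist k ps) = last (B 1)" using Bne[OF one] unfolding C by simp
    also have "\<dots> = last (Clist k (W 1)) @ [r ! 0]" using G[OF one]
      by (simp add: B_def Good_def last_map)
    finally have lc: "last (Clist k ps) = last (Clist k (W 1)) @ [r ! 0]" .
    define L where "L = last (Clist k (W 1))"
    have Lin: "L \<in> set (Clist k (W 1))" using G[OF one] unfolding Good_def L_def by (metis last_in_set)
    then have lL: "length L = Suc j'" using G[OF one] lenW by (simp add: Good_def arr_def)
    have fL: "flip k (Suc j') L = W 1" using G[OF one] lenW by (simp add: Good_def L_def)
    have "flip k (length ps) (last (Clist k ps)) = shift k 1 (r ! 0) # W 1"
      using flip_full[of k L "r ! 0"] lc lL fL len by (simp add: L_def)
    also have "\<dots> = ps"
    proof (rule nth_equalityI)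
      show "length (shift k 1 (r ! 0) # W 1) = length ps" using lenW len by simp
      fix d assume "d < length (shift k 1 (r ! 0) # W 1)"
      then have d: "d < j" using lenW jj by simp
      show "(shift k 1 (r ! 0) # W 1) ! d = ps ! d"
      proof (cases d)
        case 0
        have "ps ! 0 = rc k ps M" using rctop[of 0] j2 by simp
        also have "\<dots> = shift k 1 (rc k ps (M + j))" by (rule rcstep)
        also have "M + j = 0 + m" using mM by simp
        also have "rc k ps (0 + m) = r ! 0" using rcm[of 0] rnth[OF mpos] by simp
        finally show ?thesis using 0 by simp
      next
        case (Suc d')
        then have "(shift k 1 (r ! 0) # W 1) ! d = rc k ps (1 + M + d')" using d jj by (simp add: Wnth)
        also have "1 + M + d' = M + d" using Suc by simp
        also have "rc k ps \<dots> = ps ! d" using rctop d by simp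
        finally show ?thesis .
      qed
    qed
    finally show ?thesis .
  qed
  show ?thesis using P_len P_dist P_set P_succ P_ne P_hd P_last by (simp add: Good_def)
qed

lemma main: "0 < k \<Longrightarrow> length ps = Suc j' \<Longrightarrow> valid k ps \<Longrightarrow> Good k ps"
proof (induction j' arbitrary: ps)
  case 0
  then obtain x where "ps = [x]" by (auto simp: length_Suc_conv)
  then show ?case using base 0 by simp
next
  case (Suc j')
  show ?case by (rule step[OF Suc.prems(1,2,3)]) (use Suc.IH Suc.prems(1) in blast)
qed

theorem theorem3:
  fixes n k :: nat and \<pi> :: "csym list"
  assumes "n \<ge> 1" and "k \<ge> 1" and "\<pi> \<in> Cnk n k"
  shows "distinct (Clist k \<pi>) \<and> set (Clist k \<pi>) = Cnk n k
       \<and> length (Clist k \<pi>) = k ^ n * fact n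
       \<and> (\<forall>t. Suc t < length (Clist k \<pi>) \<longrightarrow>
              (\<exists>i\<in>{1..n}. Clist k \<pi> ! Suc t = flip k i (Clist k \<pi> ! t)))
       \<and> hd (Clist k \<pi>) = \<pi>
       \<and> flip k n (last (Clist k \<pi>)) = \<pi>"
proof -
  have len: "length \<pi> = n" and v: "valid k \<pi>" and A: "arr k \<pi> = Cnk n k"
    using assms(3) by (auto simp: Cnk_def valid_def arr_def)
  obtain j' where j': "length \<pi> = Suc j'" using len assms(1) by (cases n) auto
  have G: "Good k \<pi>" using main[OF _ j' v] assms(2) by simp
  then show ?thesis using len A unfolding Good_def successively_conv_nth R_def by auto
qed
end
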